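(* Let $\lambda$ be an infinite cardinal with $\lambda^{\aleph_0}=\lambda$, and let $C=\{\delta_\xi:\xi<\lambda^+\}\subseteq\lambda^+$ be a closed unbounded set enumerated in increasing order. Then there is a function $K:[\lambda^+]^{\aleph_0}\to\lambda$ such that whenever $A,B\in[\lambda^+]^{\aleph_0}$ satisfy $K(A)=K(B)$ and there is $\xi<\lambda^+$ with $A\cap[\delta_\xi,\delta_{\xi+1})\neq\emptyset$ and $B\cap[\delta_\xi,\delta_{\xi+1})\neq\emptyset$, then $A\cap\delta_{\xi+1}=B\cap\delta_{\xi+1}$. (Consequently, if $K(A)=K(B)$ then $A\cap B$ is an initial segment of both $A$ and $B$.)
   Context: $[\lambda^+]^{\aleph_0}$ denotes the set of countably infinite subsets of $\lambda^+$. Ordinals are identified with the sets of smaller ordinals, so $A\cap\delta$ is the set of elements of $A$ below $\delta$. *)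

theory Defs
  imports Main "HOL-Library.Countable_Set"
begin

text \<open>Ordinals below a cardinal are modelled as the field of a well-order (cardinal order) R.
  Strict order: (a,b) \<in> R and a \<noteq> b.\<close>

definition ord_less :: "'a rel \<Rightarrow> 'a \<Rightarrow> 'a \<Rightarrow> bool" where
  "ord_less R a b \<longleftrightarrow> (a, b) \<in> R \<and> a \<noteq> b"

definition ord_succ :: "'a rel \<Rightarrow> 'a \<Rightarrow> 'a" where
  "ord_succ R x = wo_rel.suc R {x}"

definition club :: "'a rel \<Rightarrow> 'a set \<Rightarrow> bool" where
  "club R C \<longleftrightarrow> C \<subseteq> Field R
     \<and> (\<forall>a\<in>Field R. \<exists>c\<in>C. (a, c) \<in> R)
     \<and> (\<forall>a\<in>Field R. (\<exists>b. ord_less R b a)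
            \<and> (\<forall>b. ord_less R b a \<longrightarrow> (\<exists>c\<in>C. ord_less R b c \<and> ord_less R c a))
            \<longrightarrow> a \<in> C)"

definition ctbl_subsets :: "'a rel \<Rightarrow> 'a set set" where
  "ctbl_subsets R = {A. A \<subseteq> Field R \<and> countable A \<and> infinite A}"

definition ord_interval :: "'a rel \<Rightarrow> 'a \<Rightarrow> 'a \<Rightarrow> 'a set" where
  "ord_interval R a b = {x \<in> Field R. (a, x) \<in> R \<and> ord_less R x b}"

definition ord_below :: "'a rel \<Rightarrow> 'a \<Rightarrow> 'a set" where
  "ord_below R b = {x \<in> Field R. ord_less R x b}"

end

theory Submission
  imports Defs
begin

context includes cardinal_syntax begin

lemma underS_small:
  assumes L: "Card_order L" and R: "Card_order R" and RS: "(R, cardSuc L) \<in> ordIso"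
    and g: "\<gamma> \<in> Field R"
  shows "|underS R \<gamma>| \<le>o |Field L|"
proof -
  have 1: "|underS R \<gamma>| <o R" using card_of_underS[OF R g] .
  have 2: "|underS R \<gamma>| <o cardSuc L" using 1 RS ordLess_ordIso_trans by blast
  have 3: "|underS R \<gamma>| \<le>o L"
  proof (rule ccontr)
    assume "\<not> |underS R \<gamma>| \<le>o L"
    then have "L <o |underS R \<gamma>|"
      using not_ordLeq_iff_ordLess L card_of_Well_order card_order_on_well_order_on by blast
    then have "cardSuc L \<le>o |underS R \<gamma>|"
      using cardSuc_ordLess_ordLeq[OF L card_of_Card_order] by blast
    then show False using 2 not_ordLess_ordLeq by blast
  qed
  show ?thesis using 3 card_of_Field_ordIso[OF L] ordIso_symmetric ordLeq_ordIso_trans by blast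
qed

lemma exists_e:
  assumes L: "Card_order L" and R: "Card_order R" and RS: "(R, cardSuc L) \<in> ordIso"
  shows "\<exists>e. \<forall>\<gamma>. inj_on (e \<gamma>) (underS R \<gamma>) \<and> e \<gamma> ` underS R \<gamma> \<subseteq> Field L"
proof -
  have "\<forall>\<gamma>. \<exists>f. inj_on f (underS R \<gamma>) \<and> f ` underS R \<gamma> \<subseteq> Field L"
  proof
    fix \<gamma>
    show "\<exists>f. inj_on f (underS R \<gamma>) \<and> f ` underS R \<gamma> \<subseteq> Field L"
    proof (cases "\<gamma> \<in> Field R")
      case True
      then show ?thesis using underS_small[OF L R RS True] card_of_ordLeq by blast
    next
      case False
      then have "underS R \<gamma> = {}" by (auto simp: underS_def Field_def)
      then show ?thesis by auto
    qed
  qed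
  then show ?thesis by metis
qed

lemma exists_g:
  assumes L: "Card_order L" and P: "(BNF_Cardinal_Arithmetic.cexp L natLeq, L) \<in> ordIso"
  shows "\<exists>g. inj_on g (Func (UNIV::nat set) (Field L)) \<and> g ` Func UNIV (Field L) \<subseteq> Field L"
proof -
  have "|Func (UNIV::nat set) (Field L)| =o L" using P unfolding cexp_def Field_natLeq by simp
  then have "|Func (UNIV::nat set) (Field L)| \<le>o |Field L|"
    using card_of_Field_ordIso[OF L] ordIso_symmetric ordIso_transitive ordIso_iff_ordLeq by blast
  then show ?thesis using card_of_ordLeq by blast
qed

lemma no_max:
  assumes R: "Card_order R" and inf: "infinite (Field R)" and x: "\<xi> \<in> Field R"
  shows "\<exists>\<eta>\<in>Field R. \<eta> \<noteq> \<xi> \<and> (\<xi>, \<eta>) \<in> R"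
proof (rule ccontr)
  assume nm: "\<not> (\<exists>\<eta>\<in>Field R. \<eta> \<noteq> \<xi> \<and> (\<xi>, \<eta>) \<in> R)"
  have W: "Well_order R" using R card_order_on_well_order_on by blast
  then have tot: "\<forall>a\<in>Field R. \<forall>b\<in>Field R. a \<noteq> b \<longrightarrow> (a,b)\<in>R \<or> (b,a)\<in>R"
    unfolding well_order_on_def linear_order_on_def total_on_def by blast
  have eq: "Field R = underS R \<xi> \<union> {\<xi>}"
    using nm x tot by (auto simp: underS_def intro: FieldI1)
  have u: "|underS R \<xi>| <o R" using card_of_underS[OF R x] .
  have fin: "finite (Field |{\<xi>}| )" by (simp add: Field_card_of)
  have s: "|{\<xi>}| <o R" by (rule finite_ordLess_infinite[OF card_of_Well_order W fin inf])
  have "|underS R \<xi> \<union> {\<xi>}| <o R" by (rule card_of_Un_ordLess_infinite_Field[OF inf R u s])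
  then have "|Field R| <o R" using eq by simp
  then show False using not_ordLess_ordIso card_of_Field_ordIso[OF R] by metis
qed

lemma infinite_R:
  assumes L: "Card_order L" and R: "Card_order R" and RS: "(R, cardSuc L) \<in> ordIso"
    and inf: "infinite (Field L)"
  shows "infinite (Field R)"
proof -
  have "infinite (Field (cardSuc L))" using cardSuc_finite[OF L] inf by simp
  moreover have "R =o |Field (cardSuc L)|"
    using RS card_of_Field_ordIso[OF cardSuc_Card_order[OF L]] ordIso_symmetric ordIso_transitive by blast
  ultimately show ?thesis using card_of_ordIso_finite_Field[OF R] by blast
qed
end


lemma wo_trans_antisym:
  assumes W: "Well_order R" shows "trans R" "antisym R"
  using W unfolding well_order_on_def linear_order_on_def partial_order_on_def preorder_on_def by auto

lemma ol_le_trans: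
  assumes W: "Well_order R" and ab: "(a, b) \<in> R" and bc: "ord_less R b c"
  shows "ord_less R a c"
proof -
  have t: "trans R" and an: "antisym R" using wo_trans_antisym[OF W] by auto
  have bc': "(b, c) \<in> R" "b \<noteq> c" using bc unfolding ord_less_def by auto
  have ac: "(a, c) \<in> R" using t ab bc'(1) by (rule transD)
  have "a \<noteq> c"
  proof
    assume "a = c"
    then have cb: "(c, b) \<in> R" using ab by simp
    have "b = c" using an bc'(1) cb by (rule antisymD)
    then show False using bc'(2) by simp
  qed
  then show ?thesis using ac unfolding ord_less_def by simp
qed

lemma ol_trans:
  assumes W: "Well_order R" and ab: "ord_less R a b" and bc: "ord_less R b c"
  shows "ord_less R a c"
  using ol_le_trans[OF W _ bc] ab unfolding ord_less_def by blast

lemma ol_irrefl: "\<not> ord_less R a a" by (simp add: ord_less_def)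

lemma ol_asym:
  assumes W: "Well_order R" and ab: "ord_less R a b" shows "\<not> ord_less R b a"
proof
  assume "ord_less R b a"
  then have "ord_less R a a" using ol_trans[OF W ab] by blast
  then show False by (simp add: ord_less_def)
qed

lemma ol_total:
  assumes W: "Well_order R" and "a \<in> Field R" and "b \<in> Field R"
  shows "a = b \<or> ord_less R a b \<or> ord_less R b a"
proof -
  have "total_on (Field R) R" using W
    unfolding well_order_on_def linear_order_on_def by auto
  then show ?thesis using assms(2,3) unfolding ord_less_def total_on_def by blast
qed

lemma ol_Field: "ord_less R a b \<Longrightarrow> a \<in> Field R \<and> b \<in> Field R"
  unfolding ord_less_def by (auto intro: FieldI1 FieldI2)

lemma ol_underS: "ord_less R a b \<longleftrightarrow> a \<in> underS R b"
  unfolding ord_less_def underS_def by auto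

lemma ol_induct:
  assumes W: "Well_order R"
    and step: "\<And>z. (\<And>y. ord_less R y z \<Longrightarrow> P y) \<Longrightarrow> P z"
  shows "P z"
proof -
  have wf: "wf (R - Id)" using W unfolding well_order_on_def by auto
  show ?thesis
    by (rule wf_induct[OF wf]) (rule step, auto simp: ord_less_def)
qed

section \<open>Closure\<close>

definition cstep :: "'a rel \<Rightarrow> ('a \<Rightarrow> 'a \<Rightarrow> 'k) \<Rightarrow> 'a set \<Rightarrow> 'a set" where
  "cstep R e M = M \<union> {\<beta>. \<exists>\<gamma>\<in>M. \<exists>\<gamma>2\<in>M. \<exists>\<beta>2\<in>M.
      ord_less R \<beta> \<gamma> \<and> ord_less R \<beta>2 \<gamma>2 \<and> e \<gamma> \<beta> = e \<gamma>2 \<beta>2}"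

definition clo :: "'a rel \<Rightarrow> ('a \<Rightarrow> 'a \<Rightarrow> 'k) \<Rightarrow> 'a set \<Rightarrow> 'a set" where
  "clo R e M0 = (\<Union>n. (cstep R e ^^ n) M0)"

lemma cstep_countable:
  assumes inj: "\<forall>\<gamma>. inj_on (e \<gamma>) (underS R \<gamma>)" and M: "countable M"
  shows "countable (cstep R e M)"
proof -
  define V where "V = (\<lambda>(\<gamma>2, \<beta>2). e \<gamma>2 \<beta>2) ` (M \<times> M)"
  have "countable (M \<times> M)" using M M by (rule countable_SIGMA)
  then have V: "countable V" unfolding V_def by (rule countable_image)
  have "{\<beta>. \<exists>\<gamma>\<in>M. \<exists>\<gamma>2\<in>M. \<exists>\<beta>2\<in>M.
      ord_less R \<beta> \<gamma> \<and> ord_less R \<beta>2 \<gamma>2 \<and> e \<gamma> \<beta> = e \<gamma>2 \<beta>2}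
      \<subseteq> (\<Union>\<gamma>\<in>M. {\<beta>\<in>underS R \<gamma>. e \<gamma> \<beta> \<in> V})"
  proof
    fix \<beta> assume "\<beta> \<in> {\<beta>. \<exists>\<gamma>\<in>M. \<exists>\<gamma>2\<in>M. \<exists>\<beta>2\<in>M.
      ord_less R \<beta> \<gamma> \<and> ord_less R \<beta>2 \<gamma>2 \<and> e \<gamma> \<beta> = e \<gamma>2 \<beta>2}"
    then obtain \<gamma> \<gamma>2 \<beta>2 where h: "\<gamma> \<in> M" "\<gamma>2 \<in> M" "\<beta>2 \<in> M"
      "ord_less R \<beta> \<gamma>" "e \<gamma> \<beta> = e \<gamma>2 \<beta>2" by blast
    have "(\<gamma>2, \<beta>2) \<in> M \<times> M" using h by simp
    then have "e \<gamma>2 \<beta>2 \<in> V" unfolding V_def by (rule rev_image_eqI) simp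
    then have "\<beta> \<in> {\<beta>\<in>underS R \<gamma>. e \<gamma> \<beta> \<in> V}" using h(4,5) ol_underS[of R \<beta> \<gamma>] by simp
    then show "\<beta> \<in> (\<Union>\<gamma>\<in>M. {\<beta>\<in>underS R \<gamma>. e \<gamma> \<beta> \<in> V})" using h(1) by blast
  qed
  moreover have "countable (\<Union>\<gamma>\<in>M. {\<beta>\<in>underS R \<gamma>. e \<gamma> \<beta> \<in> V})"
  proof (rule countable_UN[OF M])
    fix \<gamma> assume "\<gamma> \<in> M"
    show "countable {\<beta>\<in>underS R \<gamma>. e \<gamma> \<beta> \<in> V}"
    proof (rule countable_image_inj_on)
      have "e \<gamma> ` {\<beta> \<in> underS R \<gamma>. e \<gamma> \<beta> \<in> V} \<subseteq> V" by blast
      then show "countable (e \<gamma> ` {\<beta> \<in> underS R \<gamma>. e \<gamma> \<beta> \<in> V})"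
        using V by (rule countable_subset)
      have "{\<beta> \<in> underS R \<gamma>. e \<gamma> \<beta> \<in> V} \<subseteq> underS R \<gamma>" by blast
      then show "inj_on (e \<gamma>) {\<beta> \<in> underS R \<gamma>. e \<gamma> \<beta> \<in> V}"
        using inj inj_on_subset by blast
    qed
  qed
  ultimately have "countable {\<beta>. \<exists>\<gamma>\<in>M. \<exists>\<gamma>2\<in>M. \<exists>\<beta>2\<in>M.
      ord_less R \<beta> \<gamma> \<and> ord_less R \<beta>2 \<gamma>2 \<and> e \<gamma> \<beta> = e \<gamma>2 \<beta>2}"
    by (rule countable_subset)
  then show ?thesis unfolding cstep_def using M by (rule countable_Un[rotated])
qed

lemma clo_countable:
  assumes inj: "\<forall>\<gamma>. inj_on (e \<gamma>) (underS R \<gamma>)" and M: "countable M0"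
  shows "countable (clo R e M0)"
proof -
  have st: "countable ((cstep R e ^^ n) M0)" for n
  proof (induction n)
    case 0 show ?case using M by (simp only: funpow_0)
  next
    case (Suc n)
    have "countable (cstep R e ((cstep R e ^^ n) M0))" by (rule cstep_countable[OF inj Suc.IH])
    then show ?case by (simp only: funpow.simps comp_apply)
  qed
  have "countable (\<Union>n\<in>(UNIV::nat set). (cstep R e ^^ n) M0)"
    by (rule countable_UN[OF countableI_type st])
  then show ?thesis unfolding clo_def .
qed

lemma clo_base: "M0 \<subseteq> clo R e M0"
proof
  fix x assume "x \<in> M0"
  then have "x \<in> (cstep R e ^^ 0) M0" by simp
  then show "x \<in> clo R e M0" unfolding clo_def by (rule UN_I[OF UNIV_I])
qed

lemma cstep_sub: "M \<subseteq> cstep R e M"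
  unfolding cstep_def by (rule Un_upper1)

lemma stage_Suc: "(cstep R e ^^ n) M0 \<subseteq> (cstep R e ^^ Suc n) M0"
  by (simp only: funpow.simps comp_apply cstep_sub)

lemma stage_mono: "m \<le> n \<Longrightarrow> (cstep R e ^^ m) M0 \<subseteq> (cstep R e ^^ n) M0"
proof (induction n)
  case 0 then show ?case by simp
next
  case (Suc k)
  show ?case
  proof (cases "m = Suc k")
    case True then show ?thesis by simp
  next
    case False
    then have "m \<le> k" using Suc.prems by simp
    then have "(cstep R e ^^ m) M0 \<subseteq> (cstep R e ^^ k) M0" by (rule Suc.IH)
    then show ?thesis using stage_Suc[of k R e M0] by (rule subset_trans)
  qed
qed

lemma in_clo: "x \<in> (cstep R e ^^ n) M0 \<Longrightarrow> x \<in> clo R e M0"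
  unfolding clo_def by (rule UN_I[OF UNIV_I])

lemma clo_rule:
  assumes "\<gamma> \<in> clo R e M0" "\<gamma>2 \<in> clo R e M0" "\<beta>2 \<in> clo R e M0"
    and "ord_less R \<beta> \<gamma>" "ord_less R \<beta>2 \<gamma>2" "e \<gamma> \<beta> = e \<gamma>2 \<beta>2"
  shows "\<beta> \<in> clo R e M0"
proof -
  obtain a where a: "\<gamma> \<in> (cstep R e ^^ a) M0" using assms(1) unfolding clo_def by (rule UN_E)
  obtain b where b: "\<gamma>2 \<in> (cstep R e ^^ b) M0" using assms(2) unfolding clo_def by (rule UN_E)
  obtain c where c: "\<beta>2 \<in> (cstep R e ^^ c) M0" using assms(3) unfolding clo_def by (rule UN_E)
  define n where "n = max a (max b c)"
  have le: "a \<le> n" "b \<le> n" "c \<le> n" unfolding n_def by simp_all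
  have h1: "\<gamma> \<in> (cstep R e ^^ n) M0" using stage_mono[OF le(1), of R e M0] a by (rule subsetD)
  have h2: "\<gamma>2 \<in> (cstep R e ^^ n) M0" using stage_mono[OF le(2), of R e M0] b by (rule subsetD)
  have h3: "\<beta>2 \<in> (cstep R e ^^ n) M0" using stage_mono[OF le(3), of R e M0] c by (rule subsetD)
  have "\<beta> \<in> {\<beta>. \<exists>\<gamma>\<in>(cstep R e ^^ n) M0. \<exists>\<gamma>2\<in>(cstep R e ^^ n) M0. \<exists>\<beta>2\<in>(cstep R e ^^ n) M0.
      ord_less R \<beta> \<gamma> \<and> ord_less R \<beta>2 \<gamma>2 \<and> e \<gamma> \<beta> = e \<gamma>2 \<beta>2}"
    using h1 h2 h3 assms(4-6) by blast
  then have "\<beta> \<in> cstep R e ((cstep R e ^^ n) M0)"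
    unfolding cstep_def by (rule UnI2)
  then have "\<beta> \<in> (cstep R e ^^ Suc n) M0" by (simp only: funpow.simps comp_apply)
  then show ?thesis by (rule in_clo)
qed

lemma cstep_Field:
  assumes "M \<subseteq> Field R" shows "cstep R e M \<subseteq> Field R"
proof
  fix x assume "x \<in> cstep R e M"
  then consider "x \<in> M" | "\<exists>\<gamma>. ord_less R x \<gamma>" unfolding cstep_def by blast
  then show "x \<in> Field R"
  proof cases
    case 1 then show ?thesis using assms by blast
  next
    case 2
    then obtain \<gamma> where "ord_less R x \<gamma>" by blast
    then show ?thesis using ol_Field by metis
  qed
qed

lemma clo_Field:
  assumes "M0 \<subseteq> Field R" shows "clo R e M0 \<subseteq> Field R"
proof -
  have "(cstep R e ^^ n) M0 \<subseteq> Field R" for n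
  proof (induction n)
    case 0 then show ?case using assms by simp
  next
    case (Suc n) then show ?case using cstep_Field by (simp only: funpow.simps comp_apply)
  qed
  then show ?thesis unfolding clo_def by blast
qed



lemma key_sub:
  assumes W: "Well_order R"
    and M1F: "M1 \<subseteq> Field R" and M2F: "M2 \<subseteq> Field R"
    and r1: "range m1 = M1" and r2: "range m2 = M2"
    and ordeq: "\<forall>i j. ord_less R (m1 i) (m1 j) \<longleftrightarrow> ord_less R (m2 i) (m2 j)"
    and memeq: "\<forall>i. m1 i \<in> A1 \<longleftrightarrow> m2 i \<in> A2"
    and A1: "A1 \<subseteq> M1"
    and Z12: "\<forall>\<beta>\<in>M1. ord_less R \<beta> \<gamma> \<longrightarrow> \<beta> \<in> M2"
    and Z21: "\<forall>\<beta>\<in>M2. ord_less R \<beta> \<gamma> \<longrightarrow> \<beta> \<in> M1"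
  shows "A1 \<inter> ord_below R \<gamma> \<subseteq> A2"
proof -
  have fix_: "\<forall>i. m1 i = z \<longrightarrow> ord_less R z \<gamma> \<longrightarrow> m2 i = z" for z
  proof (induction z rule: ol_induct[OF W])
    case (1 z)
    show ?case
    proof (intro allI impI)
      fix i assume zi: "m1 i = z" and zg: "ord_less R z \<gamma>"
      show "m2 i = z"
      proof (rule ccontr)
        assume ne: "m2 i \<noteq> z"
        have f1: "m2 i \<in> Field R" using r2 M2F by auto
        have f2: "z \<in> Field R" using zi r1 M1F by auto
        from ol_total[OF W f1 f2] ne
        consider "ord_less R (m2 i) z" | "ord_less R z (m2 i)" by blast
        then show False
        proof cases
          case 1
          have lt: "ord_less R (m2 i) \<gamma>" using ol_trans[OF W 1 zg] .
          have m2M: "m2 i \<in> M2" using r2 by (metis rangeI)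
          have "m2 i \<in> M1" using Z21 m2M lt by blast
          then obtain k where k: "m1 k = m2 i" using r1 by (metis imageE)
          have lk1: "ord_less R (m1 k) z" using k 1 by simp
          have lk1g: "ord_less R (m1 k) \<gamma>" using k lt by simp
          have mk: "m2 k = m1 k" using "1.IH"[OF lk1, rule_format, OF refl lk1g] .
          have "ord_less R (m1 k) (m1 i)" using lk1 zi by simp
          then have "ord_less R (m2 k) (m2 i)" using ordeq by blast
          then show False using k mk ol_irrefl by metis
        next
          case 2
          have m1M: "m1 i \<in> M1" using r1 by (metis rangeI)
          have "z \<in> M2" using Z12 m1M zi zg by blast
          then obtain k where k: "m2 k = z" using r2 by (metis imageE)
          have "ord_less R (m2 k) (m2 i)" using k 2 by simp
          then have "ord_less R (m1 k) (m1 i)" using ordeq by blast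
          then have lk: "ord_less R (m1 k) z" using zi by simp
          have mk: "m2 k = m1 k" using "1.IH"[OF lk, rule_format, OF refl ol_trans[OF W lk zg]] .
          then show False using k lk ol_irrefl by metis
        qed
      qed
    qed
  qed
  show ?thesis
  proof
    fix \<beta> assume b: "\<beta> \<in> A1 \<inter> ord_below R \<gamma>"
    then have "\<beta> \<in> M1" using A1 by auto
    then obtain i where i: "m1 i = \<beta>" using r1 by (metis imageE)
    have lg: "ord_less R \<beta> \<gamma>" using b unfolding ord_below_def by auto
    have "m2 i = \<beta>" using fix_[of \<beta>, rule_format, OF i lg] .
    moreover have "m1 i \<in> A1" using i b by simp
    moreover have "m1 i \<in> A1 \<longleftrightarrow> m2 i \<in> A2" using memeq by blast
    ultimately show "\<beta> \<in> A2" by simp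
  qed
qed

lemma closed_below:
  assumes r1: "range m1 = M1" and r2: "range m2 = M2"
    and ordeq: "\<forall>i j. ord_less R (m1 i) (m1 j) \<longleftrightarrow> ord_less R (m2 i) (m2 j)"
    and labeq: "\<forall>i j. ord_less R (m1 j) (m1 i) \<longrightarrow> e (m1 i) (m1 j) = e (m2 i) (m2 j)"
    and M2: "M2 = clo R e M0"
    and g1: "\<gamma> \<in> M1" and g2: "\<gamma> \<in> M2"
  shows "\<forall>\<beta>\<in>M1. ord_less R \<beta> \<gamma> \<longrightarrow> \<beta> \<in> M2"
proof (intro ballI impI)
  fix \<beta> assume b: "\<beta> \<in> M1" and bg: "ord_less R \<beta> \<gamma>"
  obtain i where i: "\<gamma> = m1 i" using g1 r1 by (metis imageE)
  obtain j where j: "\<beta> = m1 j" using b r1 by (metis imageE)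
  have l1: "ord_less R (m1 j) (m1 i)" using bg unfolding i j .
  have o2: "ord_less R (m2 j) (m2 i)" using ordeq l1 by (simp only:)
  have e2: "e (m1 i) (m1 j) = e (m2 i) (m2 j)" using labeq l1 by (simp only:)
  have c1: "m2 i \<in> clo R e M0" using r2 M2 rangeI[of m2 i] by (simp only:)
  have c2: "m2 j \<in> clo R e M0" using r2 M2 rangeI[of m2 j] by (simp only:)
  have c3: "m1 i \<in> clo R e M0" using g2 M2 i by (simp only:)
  have "m1 j \<in> clo R e M0" by (rule clo_rule[OF c3 c1 c2 l1 o2 e2])
  then show "\<beta> \<in> M2" using M2 j by (simp only:)
qed



lemma succ_props:
  assumes W: "Well_order R" and nomax: "\<forall>\<xi>\<in>Field R. \<exists>\<eta>\<in>Field R. \<eta> \<noteq> \<xi> \<and> (\<xi>, \<eta>) \<in> R"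
    and x: "\<xi> \<in> Field R"
  shows "ord_succ R \<xi> \<in> Field R" "ord_less R \<xi> (ord_succ R \<xi>)"
    "\<And>\<eta>. ord_less R \<xi> \<eta> \<Longrightarrow> (ord_succ R \<xi>, \<eta>) \<in> R"
proof -
  have wo: "wo_rel R" using W by (simp add: wo_rel_def)
  have sub: "{\<xi>} \<subseteq> Field R" using x by simp
  have ab: "AboveS R {\<xi>} \<noteq> {}" using nomax x by (auto simp: AboveS_def)
  show "ord_succ R \<xi> \<in> Field R" unfolding ord_succ_def using wo_rel.suc_inField[OF wo sub ab] .
  show "ord_less R \<xi> (ord_succ R \<xi>)" unfolding ord_succ_def ord_less_def
    using wo_rel.suc_greater[OF wo sub ab] by auto
  fix \<eta> assume "ord_less R \<xi> \<eta>"
  then have "\<eta> \<in> AboveS R {\<xi>}" unfolding AboveS_def ord_less_def by (auto intro: FieldI2)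
  then show "(ord_succ R \<xi>, \<eta>) \<in> R" unfolding ord_succ_def using wo_rel.suc_least_AboveS[OF wo] by blast
qed

lemma disj_ordered:
  assumes W: "Well_order R" and nomax: "\<forall>\<xi>\<in>Field R. \<exists>\<eta>\<in>Field R. \<eta> \<noteq> \<xi> \<and> (\<xi>, \<eta>) \<in> R"
    and dF: "\<forall>\<xi>\<in>Field R. \<delta> \<xi> \<in> Field R"
    and dm: "\<forall>\<xi>\<in>Field R. \<forall>\<eta>\<in>Field R. ord_less R \<xi> \<eta> \<longrightarrow> ord_less R (\<delta> \<xi>) (\<delta> \<eta>)"
    and xe: "ord_less R \<xi> \<eta>" 
    and x1: "x \<in> ord_interval R (\<delta> \<xi>) (\<delta> (ord_succ R \<xi>))"
    and x2: "x \<in> ord_interval R (\<delta> \<eta>) (\<delta> (ord_succ R \<eta>))"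
  shows False
proof -
  have xF: "\<xi> \<in> Field R" "\<eta> \<in> Field R" using ol_Field[OF xe] by auto
  have sF: "ord_succ R \<xi> \<in> Field R" and le: "(ord_succ R \<xi>, \<eta>) \<in> R"
    using succ_props[OF W nomax xF(1)] xe by auto
  have rf: "refl_on (Field R) R" using W
    unfolding well_order_on_def linear_order_on_def partial_order_on_def preorder_on_def by auto
  have tr: "trans R" using W
    unfolding well_order_on_def linear_order_on_def partial_order_on_def preorder_on_def by auto
  have d1: "(\<delta> (ord_succ R \<xi>), \<delta> \<eta>) \<in> R"
  proof (cases "ord_succ R \<xi> = \<eta>")
    case True then show ?thesis using rf dF xF by (auto simp: refl_on_def)
  next
    case False then show ?thesis using dm sF xF le by (auto simp: ord_less_def)
  qed
  have "(\<delta> \<eta>, x) \<in> R" using x2 by (simp add: ord_interval_def)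
  then have "(\<delta> (ord_succ R \<xi>), x) \<in> R" using d1 tr by (meson transD)
  moreover have "ord_less R x (\<delta> (ord_succ R \<xi>))" using x1 by (simp add: ord_interval_def)
  ultimately have "ord_less R (\<delta> (ord_succ R \<xi>)) (\<delta> (ord_succ R \<xi>))"
    using ol_le_trans[OF W] by blast
  then show False by (simp add: ord_less_def)
qed

lemma disj:
  assumes W: "Well_order R" and nomax: "\<forall>\<xi>\<in>Field R. \<exists>\<eta>\<in>Field R. \<eta> \<noteq> \<xi> \<and> (\<xi>, \<eta>) \<in> R"
    and dF: "\<forall>\<xi>\<in>Field R. \<delta> \<xi> \<in> Field R"
    and dm: "\<forall>\<xi>\<in>Field R. \<forall>\<eta>\<in>Field R. ord_less R \<xi> \<eta> \<longrightarrow> ord_less R (\<delta> \<xi>) (\<delta> \<eta>)"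
    and F: "\<xi> \<in> Field R" "\<eta> \<in> Field R"
    and x1: "x \<in> ord_interval R (\<delta> \<xi>) (\<delta> (ord_succ R \<xi>))"
    and x2: "x \<in> ord_interval R (\<delta> \<eta>) (\<delta> (ord_succ R \<eta>))"
  shows "\<xi> = \<eta>"
  using ol_total[OF W F] disj_ordered[OF W nomax dF dm _ x1 x2] disj_ordered[OF W nomax dF dm _ x2 x1]
  by blast



theorem lemma2:
  fixes L :: "'k rel" and R :: "'a rel" and C :: "'a set" and \<delta> :: "'a \<Rightarrow> 'a"
  assumes lam_card: "Card_order L" and lam_inf: "infinite (Field L)"
    and lam_pow: "(BNF_Cardinal_Arithmetic.cexp L natLeq, L) \<in> ordIso"
    and R_card: "Card_order R" and R_succ: "(R, cardSuc L) \<in> ordIso"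
    and C_club: "club R C"
    and \<delta>_bij: "bij_betw \<delta> (Field R) C"
    and \<delta>_mono: "\<forall>\<xi>\<in>Field R. \<forall>\<eta>\<in>Field R. ord_less R \<xi> \<eta> \<longrightarrow> ord_less R (\<delta> \<xi>) (\<delta> \<eta>)"
  shows "\<exists>K :: 'a set \<Rightarrow> 'k.
           (\<forall>A\<in>ctbl_subsets R. K A \<in> Field L) \<and>
           (\<forall>A\<in>ctbl_subsets R. \<forall>B\<in>ctbl_subsets R. \<forall>\<xi>\<in>Field R.
              K A = K B
              \<and> A \<inter> ord_interval R (\<delta> \<xi>) (\<delta> (ord_succ R \<xi>)) \<noteq> {}
              \<and> B \<inter> ord_interval R (\<delta> \<xi>) (\<delta> (ord_succ R \<xi>)) \<noteq> {}
              \<longrightarrow> A \<inter> ord_below R (\<delta> (ord_succ R \<xi>)) = B \<inter> ord_below R (\<delta> (ord_succ R \<xi>)))"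
proof -
  obtain e where e: "\<forall>\<gamma>. inj_on (e \<gamma>) (underS R \<gamma>) \<and> e \<gamma> ` underS R \<gamma> \<subseteq> Field L"
    using exists_e[OF lam_card R_card R_succ] by blast
  have einj: "\<forall>\<gamma>. inj_on (e \<gamma>) (underS R \<gamma>)" using e by blast
  obtain g where g: "inj_on g (Func (UNIV::nat set) (Field L))" "g ` Func UNIV (Field L) \<subseteq> Field L"
    using exists_g[OF lam_card lam_pow] by blast
  have W: "Well_order R" using R_card card_order_on_well_order_on by blast
  have infR: "infinite (Field R)" using infinite_R[OF lam_card R_card R_succ lam_inf] .
  have nomax: "\<forall>\<xi>\<in>Field R. \<exists>\<eta>\<in>Field R. \<eta> \<noteq> \<xi> \<and> (\<xi>, \<eta>) \<in> R"
    using no_max[OF R_card infR] by blast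
  have CF: "C \<subseteq> Field R" using C_club unfolding club_def by (rule conjunct1)
  have dC: "\<delta> ` Field R = C" using \<delta>_bij unfolding bij_betw_def by (rule conjunct2)
  have dF: "\<forall>\<xi>\<in>Field R. \<delta> \<xi> \<in> Field R"
    using CF dC by blast
  have "Field L \<noteq> {}" using lam_inf by (rule infinite_imp_nonempty)
  then obtain a0 where a0: "a0 \<in> Field L" by blast
  have "infinite (Field L - {a0})" using lam_inf by simp
  then have "Field L - {a0} \<noteq> {}" by (rule infinite_imp_nonempty)
  then obtain a1 where a1': "a1 \<in> Field L - {a0}" by blast
  then have a1: "a1 \<in> Field L" "a1 \<noteq> a0" by simp_all
  define top where "top \<xi> = \<delta> (ord_succ R \<xi>)" for \<xi>
  define Iv where "Iv \<xi> = ord_interval R (\<delta> \<xi>) (top \<xi>)" for \<xi>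
  define S where "S A = {\<xi>\<in>Field R. A \<inter> Iv \<xi> \<noteq> {}}" for A :: "'a set"
  define M where "M A = clo R e (A \<union> top ` S A)" for A
  define m where "m A = from_nat_into (M A)" for A
  define enc where "enc A = (\<lambda>n::nat. case prod_decode n of (t, k) \<Rightarrow> (case prod_decode k of (i, j) \<Rightarrow>
      if t = 0 then (if ord_less R (m A i) (m A j) then a1 else a0)
      else if t = 1 then (if m A i \<in> A then a1 else a0)
      else if ord_less R (m A j) (m A i) then e (m A i) (m A j) else a0))" for A
  define K where "K A = g (enc A)" for A
  have enc0: "enc A (prod_encode (0, prod_encode (i, j))) = (if ord_less R (m A i) (m A j) then a1 else a0)"
    for A i j by (simp add: enc_def)
  have enc1: "enc A (prod_encode (1, prod_encode (i, j))) = (if m A i \<in> A then a1 else a0)"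
    for A i j by (simp add: enc_def)
  have enc2: "enc A (prod_encode (2, prod_encode (i, j))) = (if ord_less R (m A j) (m A i) then e (m A i) (m A j) else a0)"
    for A i j by (simp add: enc_def)
  have eF: "e \<gamma> \<beta> \<in> Field L" if "ord_less R \<beta> \<gamma>" for \<beta> \<gamma>
  proof -
    have 1: "\<beta> \<in> underS R \<gamma>" using that unfolding ol_underS .
    have 2: "e \<gamma> ` underS R \<gamma> \<subseteq> Field L" using e by simp
    show ?thesis using 2 imageI[OF 1, of "e \<gamma>"] by (rule subsetD)
  qed
  have encF: "enc A \<in> Func UNIV (Field L)" for A
  proof -
    have "enc A n \<in> Field L" for n
    proof -
      obtain t k where tk: "prod_decode n = (t, k)" by (cases "prod_decode n")
      obtain i j where ij: "prod_decode k = (i, j)" by (cases "prod_decode k")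
      have ev: "enc A n = (if t = 0 then (if ord_less R (m A i) (m A j) then a1 else a0)
        else if t = 1 then (if m A i \<in> A then a1 else a0)
        else if ord_less R (m A j) (m A i) then e (m A i) (m A j) else a0)"
        unfolding enc_def by (simp only: tk ij prod.case)
      show ?thesis
      proof (cases "t = 0 \<or> t = 1")
        case True then show ?thesis unfolding ev using a0 a1 by auto
      next
        case False
        then have "enc A n = (if ord_less R (m A j) (m A i) then e (m A i) (m A j) else a0)"
          unfolding ev by simp
        then show ?thesis using a0 eF[of "m A j" "m A i"] by simp
      qed
    qed
    then show ?thesis unfolding Func_def by blast
  qed
  have KF: "K A \<in> Field L" for A using g(2) encF unfolding K_def by blast
  have SI: "\<xi> \<in> S A" if "\<xi> \<in> Field R" "x \<in> A" "x \<in> Iv \<xi>" for \<xi> x A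
    using that unfolding S_def by auto
  have Mprops: "countable (M A) \<and> A \<subseteq> M A \<and> top ` S A \<subseteq> M A \<and> M A \<subseteq> Field R \<and> range (m A) = M A"
    if A: "A \<in> ctbl_subsets R" for A
  proof -
    have AF: "A \<subseteq> Field R" "countable A" "infinite A" using A unfolding ctbl_subsets_def by auto
    define h where "h \<xi> = (SOME x. x \<in> A \<inter> Iv \<xi>)" for \<xi>
    have hS: "h \<xi> \<in> A \<inter> Iv \<xi>" if "\<xi> \<in> S A" for \<xi>
    proof -
      have "A \<inter> Iv \<xi> \<noteq> {}" using that unfolding S_def by simp
      then obtain x where "x \<in> A \<inter> Iv \<xi>" by blast
      then show ?thesis unfolding h_def by (rule someI)
    qed
    have "inj_on h (S A)"
    proof (rule inj_onI)
      fix \<xi> \<eta> assume "\<xi> \<in> S A" "\<eta> \<in> S A" "h \<xi> = h \<eta>"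
      then show "\<xi> = \<eta>"
        using hS[of \<xi>] hS[of \<eta>] disj[OF W nomax dF \<delta>_mono, of \<xi> \<eta> "h \<xi>"]
        unfolding S_def Iv_def top_def by auto
    qed
    moreover have "countable (h ` S A)" using hS AF(2) countable_subset[of "h ` S A" A] by blast
    ultimately have cS: "countable (S A)" using countable_image_inj_on by blast
    have topF: "top ` S A \<subseteq> Field R"
    proof
      fix y assume "y \<in> top ` S A"
      then obtain \<xi> where "\<xi> \<in> S A" "y = top \<xi>" by auto
      then obtain x where "x \<in> Iv \<xi>" unfolding S_def by auto
      then have "ord_less R x (top \<xi>)" unfolding Iv_def ord_interval_def by auto
      then have "top \<xi> \<in> Field R" using ol_Field by metis
      then show "y \<in> Field R" using \<open>y = top \<xi>\<close> by simp
    qed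
    have c: "countable (M A)" unfolding M_def using clo_countable[OF einj] cS AF(2) by auto
    have b: "A \<union> top ` S A \<subseteq> M A" unfolding M_def by (rule clo_base)
    have f: "M A \<subseteq> Field R" unfolding M_def using clo_Field AF(1) topF by (metis Un_least)
    have "M A \<noteq> {}" using b AF(3) by auto
    then have "range (m A) = M A" unfolding m_def using c by simp
    then show ?thesis using c b f by auto
  qed
  show ?thesis
  proof (intro exI[of _ K] conjI ballI impI)
    fix A assume "A \<in> ctbl_subsets R" then show "K A \<in> Field L" using KF by blast
  next
    fix A B \<xi>
    assume A: "A \<in> ctbl_subsets R" and B: "B \<in> ctbl_subsets R" and x: "\<xi> \<in> Field R"
      and H: "K A = K B
              \<and> A \<inter> ord_interval R (\<delta> \<xi>) (\<delta> (ord_succ R \<xi>)) \<noteq> {}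
              \<and> B \<inter> ord_interval R (\<delta> \<xi>) (\<delta> (ord_succ R \<xi>)) \<noteq> {}"
    have encEq: "enc A = enc B" using H g(1) encF unfolding K_def inj_on_def by blast
    have ordeq: "\<forall>i j. ord_less R (m A i) (m A j) \<longleftrightarrow> ord_less R (m B i) (m B j)"
    proof (intro allI)
      fix i j
      have "(if ord_less R (m A i) (m A j) then a1 else a0) = (if ord_less R (m B i) (m B j) then a1 else a0)"
        using enc0[of A i j] enc0[of B i j] encEq by simp
      then show "ord_less R (m A i) (m A j) \<longleftrightarrow> ord_less R (m B i) (m B j)"
        using a1(2) by (auto split: if_splits)
    qed
    have memeq: "\<forall>i. m A i \<in> A \<longleftrightarrow> m B i \<in> B"
    proof (intro allI)
      fix i
      have "(if m A i \<in> A then a1 else a0) = (if m B i \<in> B then a1 else a0)"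
        using enc1[of A i 0] enc1[of B i 0] encEq by simp
      then show "m A i \<in> A \<longleftrightarrow> m B i \<in> B" using a1(2) by (auto split: if_splits)
    qed
    have labeq: "\<forall>i j. ord_less R (m A j) (m A i) \<longrightarrow> e (m A i) (m A j) = e (m B i) (m B j)"
    proof (intro allI impI)
      fix i j assume l: "ord_less R (m A j) (m A i)"
      then have l2: "ord_less R (m B j) (m B i)" using ordeq by blast
      show "e (m A i) (m A j) = e (m B i) (m B j)"
        using enc2[of A i j] enc2[of B i j] encEq l l2 by simp
    qed
    have ordeq': "\<forall>i j. ord_less R (m B i) (m B j) \<longleftrightarrow> ord_less R (m A i) (m A j)" using ordeq by blast
    have memeq': "\<forall>i. m B i \<in> B \<longleftrightarrow> m A i \<in> A" using memeq by blast
    have labeq': "\<forall>i j. ord_less R (m B j) (m B i) \<longrightarrow> e (m B i) (m B j) = e (m A i) (m A j)"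
    proof (intro allI impI)
      fix i j assume "ord_less R (m B j) (m B i)"
      then have "ord_less R (m A j) (m A i)" using ordeq by blast
      then show "e (m B i) (m B j) = e (m A i) (m A j)" using labeq by simp
    qed
    have PA: "countable (M A) \<and> A \<subseteq> M A \<and> top ` S A \<subseteq> M A \<and> M A \<subseteq> Field R \<and> range (m A) = M A"
      using Mprops[OF A] .
    have PB: "countable (M B) \<and> B \<subseteq> M B \<and> top ` S B \<subseteq> M B \<and> M B \<subseteq> Field R \<and> range (m B) = M B"
      using Mprops[OF B] .
    have "\<xi> \<in> S A" "\<xi> \<in> S B" using H x unfolding S_def Iv_def top_def by auto
    then have gA: "top \<xi> \<in> M A" and gB: "top \<xi> \<in> M B" using PA PB by auto
    have Z12: "\<forall>\<beta>\<in>M A. ord_less R \<beta> (top \<xi>) \<longrightarrow> \<beta> \<in> M B"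
      by (rule closed_below[of "m A" "M A" "m B" "M B" R e, OF _ _ ordeq labeq M_def gA gB])
        (use PA PB in auto)
    have Z21: "\<forall>\<beta>\<in>M B. ord_less R \<beta> (top \<xi>) \<longrightarrow> \<beta> \<in> M A"
      by (rule closed_below[of "m B" "M B" "m A" "M A" R e, OF _ _ ordeq' labeq' M_def gB gA])
        (use PA PB in auto)
    have s1: "A \<inter> ord_below R (top \<xi>) \<subseteq> B"
      by (rule key_sub[OF W _ _ _ _ ordeq memeq _ Z12 Z21]) (use PA PB in auto)
    have s2: "B \<inter> ord_below R (top \<xi>) \<subseteq> A"
      by (rule key_sub[OF W _ _ _ _ ordeq' memeq' _ Z21 Z12]) (use PA PB in auto)
    show "A \<inter> ord_below R (\<delta> (ord_succ R \<xi>)) = B \<inter> ord_below R (\<delta> (ord_succ R \<xi>))"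
      using s1 s2 unfolding top_def by blast
  qed
qed


end
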